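(* The set $T$ is good and full.
   Context: Let $X_1,X_2,X_3$ be pairwise disjoint nonempty sets and $\Omega=X_1\times X_2\times X_3$, with projections $\Pi_i:\Omega\to X_i$. For $S\subset\Omega$, the coordinates of $S$ are the elements of $\Pi_1S\cup\Pi_2S\cup\Pi_3S$. A set $S\subset\Omega$ is good if every function $f:S\to\mathbb C$ can be written $f(w_1,w_2,w_3)=u_1(w_1)+u_2(w_2)+u_3(w_3)$ for all $(w_1,w_2,w_3)\in S$, for some functions $u_i:X_i\to\mathbb C$. A set $S$ is full if it is a maximal good subset of $\Pi_1S\times\Pi_2S\times\Pi_3S$. Construction: fix pairwise distinct elements $x_1,y_1,\alpha_{5k-4},\alpha_{5k-1}$ ($k\ge1$) of $X_1$; pairwise distinct elements $x_2,y_2,\alpha_{5k-3},\alpha_{5k}$ ($k\ge1$) of $X_2$; pairwise distinct elements $x_3,z_3,\alpha_{5k-2}$ ($k\ge1$) of $X_3$. Set the convention $\alpha_{-3}:=y_2$, $\alpha_{-2}:=z_3$. Define $a_1=(x_1,x_2,x_3)$, $a_2=(y_1,y_2,x_3)$, $a_3=(y_1,x_2,z_3)$ and for $n\ge1$: $a_{5n-1}=(\alpha_{5n-4},\alpha_{5n-3},\alpha_{5n-2})$, $a_{5n}=(\alpha_{5n-1},\alpha_{5n},\alpha_{5n-2})$, $a_{5n+1}=(\alpha_{5n-4},\alpha_{5n},\alpha_{5n-7})$, $a_{5n+2}=(\alpha_{5n-1},\alpha_{5n-3},x_3)$, $a_{5n+3}=(x_1,\alpha_{5n-8},\alpha_{5n-2})$.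 Let $T=\{a_i:i\ge1\}$. *)

theory Defs
  imports "HOL-Analysis.Analysis"
begin

definition good :: "'a set \<Rightarrow> 'a set \<Rightarrow> 'a set \<Rightarrow> ('a \<times> 'a \<times> 'a) set \<Rightarrow> bool" where
  "good X1 X2 X3 S \<longleftrightarrow> S \<subseteq> X1 \<times> X2 \<times> X3 \<and>
     (\<forall>f :: 'a \<times> 'a \<times> 'a \<Rightarrow> complex. \<exists>u1 u2 u3 :: 'a \<Rightarrow> complex.
        \<forall>w1 w2 w3. (w1, w2, w3) \<in> S \<longrightarrow> f (w1, w2, w3) = u1 w1 + u2 w2 + u3 w3)"

definition proj1 :: "('a \<times> 'a \<times> 'a) set \<Rightarrow> 'a set" where
  "proj1 S = (\<lambda>(w1, w2, w3). w1) ` S"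
definition proj2 :: "('a \<times> 'a \<times> 'a) set \<Rightarrow> 'a set" where
  "proj2 S = (\<lambda>(w1, w2, w3). w2) ` S"
definition proj3 :: "('a \<times> 'a \<times> 'a) set \<Rightarrow> 'a set" where
  "proj3 S = (\<lambda>(w1, w2, w3). w3) ` S"

definition full :: "'a set \<Rightarrow> 'a set \<Rightarrow> 'a set \<Rightarrow> ('a \<times> 'a \<times> 'a) set \<Rightarrow> bool" where
  "full X1 X2 X3 S \<longleftrightarrow> good X1 X2 X3 S \<and> S \<subseteq> proj1 S \<times> proj2 S \<times> proj3 S \<and>
     (\<forall>S'. S \<subseteq> S' \<and> S' \<subseteq> proj1 S \<times> proj2 S \<times> proj3 S \<and> good X1 X2 X3 S' \<longrightarrow> S' = S)"

text \<open>The sequence alpha indexed by integers with the convention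
  alpha(-3) = y2, alpha(-2) = z3 (only indices -3, -2 and k >= 1 are used).\<close>
definition alpha_ext :: "'a \<Rightarrow> 'a \<Rightarrow> (nat \<Rightarrow> 'a) \<Rightarrow> int \<Rightarrow> 'a" where
  "alpha_ext y2 z3 \<alpha> k = (if k = -3 then y2 else if k = -2 then z3 else \<alpha> (nat k))"

definition aseq :: "'a \<Rightarrow> 'a \<Rightarrow> 'a \<Rightarrow> 'a \<Rightarrow> 'a \<Rightarrow> 'a \<Rightarrow> (nat \<Rightarrow> 'a) \<Rightarrow> nat \<Rightarrow> 'a \<times> 'a \<times> 'a" where
  "aseq x1 y1 x2 y2 x3 z3 \<alpha> i =
    (let A = alpha_ext y2 z3 \<alpha>; n = (int i + 1) div 5; r = (int i + 1) mod 5 in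
     if i = 1 then (x1, x2, x3)
     else if i = 2 then (y1, y2, x3)
     else if i = 3 then (y1, x2, z3)
     else if r = 0 then (A (5*n-4), A (5*n-3), A (5*n-2))
     else if r = 1 then (A (5*n-1), A (5*n), A (5*n-2))
     else if r = 2 then (A (5*n-4), A (5*n), A (5*n-7))
     else if r = 3 then (A (5*n-1), A (5*n-3), x3)
     else (x1, A (5*n-8), A (5*n-2)))"

definition Tset :: "'a \<Rightarrow> 'a \<Rightarrow> 'a \<Rightarrow> 'a \<Rightarrow> 'a \<Rightarrow> 'a \<Rightarrow> (nat \<Rightarrow> 'a) \<Rightarrow> ('a \<times> 'a \<times> 'a) set" where
  "Tset x1 y1 x2 y2 x3 z3 \<alpha> = aseq x1 y1 x2 y2 x3 z3 \<alpha> ` {1..}"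

end

theory Submission
  imports Defs
begin

lemma aseq4: "aseq x1 y1 x2 y2 x3 z3 \<alpha> (5*m+4) = (\<alpha>(5*m+1), \<alpha>(5*m+2), \<alpha>(5*m+3))"
proof -
  have "(int (5*m+4) + 1) div 5 = int m + 1" "(int (5*m+4) + 1) mod 5 = 0" by presburger+
  then show ?thesis unfolding aseq_def alpha_ext_def Let_def
    by (simp add: nat_add_distrib nat_mult_distrib algebra_simps)
qed
lemma aseq5: "aseq x1 y1 x2 y2 x3 z3 \<alpha> (5*m+5) = (\<alpha>(5*m+4), \<alpha>(5*m+5), \<alpha>(5*m+3))"
proof -
  have "(int (5*m+5) + 1) div 5 = int m + 1" "(int (5*m+5) + 1) mod 5 = 1" by presburger+
  then show ?thesis unfolding aseq_def alpha_ext_def Let_def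
    by (simp add: nat_add_distrib nat_mult_distrib algebra_simps)
qed
lemma aseq6: "aseq x1 y1 x2 y2 x3 z3 \<alpha> (5*m+6) = (\<alpha>(5*m+1), \<alpha>(5*m+5), (if m = 0 then z3 else \<alpha>(5*m-2)))"
proof -
  have "(int (5*m+6) + 1) div 5 = int m + 1" "(int (5*m+6) + 1) mod 5 = 2" by presburger+
  moreover have "m \<noteq> 0 \<Longrightarrow> nat (5 * int m - 2) = 5*m-2" by linarith
  ultimately show ?thesis unfolding aseq_def alpha_ext_def Let_def
    by (simp add: nat_add_distrib nat_mult_distrib algebra_simps)
qed
lemma aseq7: "aseq x1 y1 x2 y2 x3 z3 \<alpha> (5*m+7) = (\<alpha>(5*m+4), \<alpha>(5*m+2), x3)"
proof -
  have "(int (5*m+7) + 1) div 5 = int m + 1" "(int (5*m+7) + 1) mod 5 = 3" by presburger+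
  then show ?thesis unfolding aseq_def alpha_ext_def Let_def
    by (simp add: nat_add_distrib nat_mult_distrib algebra_simps)
qed
lemma aseq8: "aseq x1 y1 x2 y2 x3 z3 \<alpha> (5*m+8) = (x1, (if m = 0 then y2 else \<alpha>(5*m-3)), \<alpha>(5*m+3))"
proof -
  have "(int (5*m+8) + 1) div 5 = int m + 1" "(int (5*m+8) + 1) mod 5 = 4" by presburger+
  moreover have "m \<noteq> 0 \<Longrightarrow> nat (5 * int m - 3) = 5*m-3" by linarith
  ultimately show ?thesis unfolding aseq_def alpha_ext_def Let_def
    by (simp add: nat_add_distrib nat_mult_distrib algebra_simps)
qed
lemma aseq123: "aseq x1 y1 x2 y2 x3 z3 \<alpha> 1 = (x1,x2,x3)" "aseq x1 y1 x2 y2 x3 z3 \<alpha> 2 = (y1,y2,x3)"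
  "aseq x1 y1 x2 y2 x3 z3 \<alpha> 3 = (y1,x2,z3)"
  unfolding aseq_def by simp_all

lemma cover: "(i::nat) \<ge> 1 \<Longrightarrow> i = 1 \<or> i = 2 \<or> i = 3 \<or> (\<exists>m. i = 5*m+4 \<or> i = 5*m+5 \<or> i = 5*m+6 \<or> i = 5*m+7 \<or> i = 5*m+8)"
proof -
  assume "i \<ge> 1"
  show ?thesis
  proof (cases "i \<le> 3")
    case True with \<open>i \<ge> 1\<close> show ?thesis by auto
  next
    case False
    define m where "m = (i-4) div 5"
    define r where "r = (i-4) mod 5"
    have "i = 5*m + 4 + r" using False unfolding m_def r_def by simp
    moreover have "r < 5" unfolding r_def by simp
    ultimately have "i = 5*m+4 \<or> i = 5*m+5 \<or> i = 5*m+6 \<or> i = 5*m+7 \<or> i = 5*m+8" by auto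
    then show ?thesis by blast
  qed
qed

lemma case_aseq:
  assumes "(i::nat) \<ge> 1" "P 1" "P 2" "P 3"
    "\<And>m. P (5*m+4)" "\<And>m. P (5*m+5)" "\<And>m. P (5*m+6)" "\<And>m. P (5*m+7)" "\<And>m. P (5*m+8)"
  shows "P i"
  by (insert cover[OF assms(1)], ((elim disjE exE); hypsubst; rule assms))

fun ccf :: "complex \<Rightarrow> (nat \<Rightarrow> complex) \<Rightarrow> nat \<Rightarrow> complex" where
  "ccf z G 0 = z"
| "ccf z G (Suc m) = (ccf z G m - G m) / 2"

lemma halves_zero:
  fixes c :: "nat \<Rightarrow> complex"
  assumes "c 0 = 0" "\<And>m. c m = 2 * c (Suc m)"
  shows "c m = 0"
proof (induction m)
  case 0 show ?case by (rule assms(1))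
next
  case (Suc m)
  have "c m = 2 * c (Suc m)" by (rule assms(2))
  with Suc.IH show ?case by simp
qed

lemma lin1: "(c1::complex) = (c0 - G)/2 \<Longrightarrow> G = F6+F7-F4-F5 \<Longrightarrow> F4 - b - c1 + (F5 - c1 - (F7 - b)) + c0 = F6"
  by algebra

lemma lin2: "(y::complex) + y2 = 0 \<Longrightarrow> y + z = 0 \<Longrightarrow> b0 + w = 0 \<Longrightarrow> c1 = w \<Longrightarrow> c0 = 2 * c1
   \<Longrightarrow> c0 = z \<Longrightarrow> b0 = y2 \<Longrightarrow> c0 = 0"
  by algebra

theorem mainTheorem3:
  fixes X1 X2 X3 :: "'a set"
    and x1 y1 x2 y2 x3 z3 :: 'a
    and \<alpha> :: "nat \<Rightarrow> 'a"
  assumes disj: "X1 \<inter> X2 = {}" "X1 \<inter> X3 = {}" "X2 \<inter> X3 = {}"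
    and ne: "X1 \<noteq> {}" "X2 \<noteq> {}" "X3 \<noteq> {}"
    and in1: "x1 \<in> X1" "y1 \<in> X1" "\<And>k. k \<ge> 1 \<Longrightarrow> \<alpha> (5*k-4) \<in> X1" "\<And>k. k \<ge> 1 \<Longrightarrow> \<alpha> (5*k-1) \<in> X1"
    and in2: "x2 \<in> X2" "y2 \<in> X2" "\<And>k. k \<ge> 1 \<Longrightarrow> \<alpha> (5*k-3) \<in> X2" "\<And>k. k \<ge> 1 \<Longrightarrow> \<alpha> (5*k) \<in> X2"
    and in3: "x3 \<in> X3" "z3 \<in> X3" "\<And>k. k \<ge> 1 \<Longrightarrow> \<alpha> (5*k-2) \<in> X3"
    and dist1: "inj_on \<alpha> ({5*k-4 | k. k \<ge> 1} \<union> {5*k-1 | k. k \<ge> 1})"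
      "x1 \<noteq> y1" "x1 \<notin> \<alpha> ` ({5*k-4 | k. k \<ge> 1} \<union> {5*k-1 | k. k \<ge> 1})"
      "y1 \<notin> \<alpha> ` ({5*k-4 | k. k \<ge> 1} \<union> {5*k-1 | k. k \<ge> 1})"
    and dist2: "inj_on \<alpha> ({5*k-3 | k. k \<ge> 1} \<union> {5*k | k. k \<ge> 1})"
      "x2 \<noteq> y2" "x2 \<notin> \<alpha> ` ({5*k-3 | k. k \<ge> 1} \<union> {5*k | k. k \<ge> 1})"
      "y2 \<notin> \<alpha> ` ({5*k-3 | k. k \<ge> 1} \<union> {5*k | k. k \<ge> 1})"
    and dist3: "inj_on \<alpha> {5*k-2 | k. k \<ge> 1}"
      "x3 \<noteq> z3" "x3 \<notin> \<alpha> ` {5*k-2 | k. k \<ge> 1}" "z3 \<notin> \<alpha> ` {5*k-2 | k. k \<ge> 1}"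
  shows "good X1 X2 X3 (Tset x1 y1 x2 y2 x3 z3 \<alpha>) \<and> full X1 X2 X3 (Tset x1 y1 x2 y2 x3 z3 \<alpha>)"
proof -
  let ?T = "Tset x1 y1 x2 y2 x3 z3 \<alpha>"
  let ?a = "aseq x1 y1 x2 y2 x3 z3 \<alpha>"
  define I1 where "I1 = ({5*k-4 | k::nat. k \<ge> 1} \<union> {5*k-1 | k. k \<ge> 1})"
  define I2 where "I2 = ({5*k-3 | k::nat. k \<ge> 1} \<union> {5*k | k. k \<ge> 1})"
  define I3 where "I3 = {5*k-2 | k::nat. k \<ge> 1}"
  have inj1: "inj_on \<alpha> I1" and inj2: "inj_on \<alpha> I2" and inj3: "inj_on \<alpha> I3"
    unfolding I1_def I2_def I3_def by (rule dist1(1), rule dist2(1), rule dist3(1))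
  have e1: "5 * Suc m - 4 = 5*m+1" "5 * Suc m - 1 = 5*m+4" "5 * Suc m - 3 = 5*m+2"
    "5 * Suc m = 5*m+5" "5 * Suc m - 2 = 5*m+3" for m :: nat by simp_all
  have mem1: "5*m+1 \<in> I1" "5*m+4 \<in> I1" for m
    unfolding I1_def by (rule UnI1, rule CollectI, rule exI[of _ "Suc m"], simp)
      (rule UnI2, rule CollectI, rule exI[of _ "Suc m"], simp)
  have mem2: "5*m+2 \<in> I2" "5*m+5 \<in> I2" for m
    unfolding I2_def by (rule UnI1, rule CollectI, rule exI[of _ "Suc m"], simp)
      (rule UnI2, rule CollectI, rule exI[of _ "Suc m"], simp)
  have mem3: "5*m+3 \<in> I3" for m
    unfolding I3_def by (rule CollectI, rule exI[of _ "Suc m"], simp)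
  have one: "1 \<le> Suc m" for m :: nat by simp
  have X1m: "\<alpha>(5*m+1) \<in> X1" "\<alpha>(5*m+4) \<in> X1" for m
    using in1(3)[OF one, unfolded e1(1)] in1(4)[OF one, unfolded e1(2)] by blast+
  have X2m: "\<alpha>(5*m+2) \<in> X2" "\<alpha>(5*m+5) \<in> X2" for m
    using in2(3)[OF one, unfolded e1(3)] in2(4)[OF one, unfolded e1(4)] by blast+
  have X3m: "\<alpha>(5*m+3) \<in> X3" for m
    using in3(3)[OF one, unfolded e1(5)] by blast
  have ne1: "\<alpha>(5*m+1) \<noteq> x1" "\<alpha>(5*m+1) \<noteq> y1" "\<alpha>(5*m+4) \<noteq> x1" "\<alpha>(5*m+4) \<noteq> y1" for m
    using dist1(3,4)[folded I1_def] imageI[OF mem1(1), of \<alpha>] imageI[OF mem1(2), of \<alpha>] by metis+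
  have ne2: "\<alpha>(5*m+2) \<noteq> x2" "\<alpha>(5*m+2) \<noteq> y2" "\<alpha>(5*m+5) \<noteq> x2" "\<alpha>(5*m+5) \<noteq> y2" for m
    using dist2(3,4)[folded I2_def] imageI[OF mem2(1), of \<alpha>] imageI[OF mem2(2), of \<alpha>] by metis+
  have ne3: "\<alpha>(5*m+3) \<noteq> x3" "\<alpha>(5*m+3) \<noteq> z3" for m
    using dist3(3,4)[folded I3_def] imageI[OF mem3, of \<alpha>] by metis+
  have inv1: "inv_into I1 \<alpha> (\<alpha>(5*m+1)) = 5*m+1" "inv_into I1 \<alpha> (\<alpha>(5*m+4)) = 5*m+4" for m
    by (rule inv_into_f_f[OF inj1 mem1(1)], rule inv_into_f_f[OF inj1 mem1(2)])
  have inv2: "inv_into I2 \<alpha> (\<alpha>(5*m+2)) = 5*m+2" "inv_into I2 \<alpha> (\<alpha>(5*m+5)) = 5*m+5" for m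
    by (rule inv_into_f_f[OF inj2 mem2(1)], rule inv_into_f_f[OF inj2 mem2(2)])
  have inv3: "inv_into I3 \<alpha> (\<alpha>(5*m+3)) = 5*m+3" for m
    by (rule inv_into_f_f[OF inj3 mem3])
  have Bsuc: "(if Suc m = 0 then y2 else \<alpha>(5*Suc m-3)) = \<alpha>(5*m+2)" for m unfolding e1 by simp
  have Csuc: "(if Suc m = 0 then z3 else \<alpha>(5*Suc m-2)) = \<alpha>(5*m+3)" for m unfolding e1(5) by simp
  have BX2: "(if m = 0 then y2 else \<alpha>(5*m-3)) \<in> X2" for m
    by (cases m) (simp add: in2, simp only: Bsuc X2m)
  have CX3: "(if m = 0 then z3 else \<alpha>(5*m-2)) \<in> X3" for m
    by (cases m) (simp add: in3, simp only: Csuc X3m)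
  have T_mem: "?a i \<in> ?T" if "i \<ge> 1" for i unfolding Tset_def using that by (intro imageI) simp
  have T_elim: "\<exists>i\<ge>1. w = ?a i" if "w \<in> ?T" for w using that unfolding Tset_def by (auto simp only: image_iff atLeast_iff)

  have good: "good X1 X2 X3 ?T"
    unfolding good_def
  proof (intro conjI allI)
    have "?a i \<in> X1 \<times> X2 \<times> X3" if "i \<ge> 1" for i
    proof (rule case_aseq[OF that])
      show "?a 1 \<in> X1 \<times> X2 \<times> X3" "?a 2 \<in> X1 \<times> X2 \<times> X3" "?a 3 \<in> X1 \<times> X2 \<times> X3"
        unfolding aseq123 using in1(1,2) in2(1,2) in3(1,2) by simp_all
      fix m
      show "?a (5*m+4) \<in> X1 \<times> X2 \<times> X3" "?a (5*m+5) \<in> X1 \<times> X2 \<times> X3"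
        "?a (5*m+7) \<in> X1 \<times> X2 \<times> X3"
        using X1m X2m X3m in3 by (simp_all add: aseq4 aseq5 aseq7)
      show "?a (5*m+6) \<in> X1 \<times> X2 \<times> X3"
        using X1m X2m CX3 by (simp add: aseq6)
      show "?a (5*m+8) \<in> X1 \<times> X2 \<times> X3"
        using X3m BX2 in1 by (simp add: aseq8)
    qed
    then show "?T \<subseteq> X1 \<times> X2 \<times> X3" using T_elim by blast
  next
    fix f :: "'a \<times> 'a \<times> 'a \<Rightarrow> complex"
    define F where "F i = f (?a i)" for i
    define G where "G m = F(5*m+6)+F(5*m+7)-F(5*m+4)-F(5*m+5)" for m
    define s where "s = (2*F 2 - 2*F 8 + F 3 - F 1 - G 0)/3"
    define cc where "cc = ccf (F 3 - F 1 - s) G"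
    define bb where "bb m = F(5*m+8) - cc (Suc m)" for m
    define A where "A m = F(5*m+4) - bb(Suc m) - cc(Suc m)" for m
    define D where "D m = F(5*m+7) - bb(Suc m)" for m
    define E where "E m = F(5*m+5) - cc(Suc m) - D m" for m
    define u1 where "u1 w = (if w = x1 then 0 else if w = y1 then s else
        (if inv_into I1 \<alpha> w mod 5 = 1 then A (inv_into I1 \<alpha> w div 5) else D (inv_into I1 \<alpha> w div 5)))" for w
    define u2 where "u2 w = (if w = x2 then F 1 else if w = y2 then bb 0 else
        (if inv_into I2 \<alpha> w mod 5 = 2 then bb (Suc (inv_into I2 \<alpha> w div 5)) else E (inv_into I2 \<alpha> w div 5 - 1)))" for w
    define u3 where "u3 w = (if w = x3 then 0 else if w = z3 then cc 0 else cc (Suc (inv_into I3 \<alpha> w div 5)))" for w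
    have cc0: "cc 0 = F 3 - F 1 - s" and ccS: "cc (Suc m) = (cc m - G m)/2" for m
      unfolding cc_def by simp_all
    have bb0: "bb 0 = F 2 - s"
      proof -
      have "s = (2*F 2 - 2*F 8 + F 3 - F 1 - G 0)/3" by (simp add: s_def)
      moreover have "bb 0 = F 8 - cc (Suc 0)" by (simp add: bb_def)
      ultimately show ?thesis using ccS[of 0] cc0 by algebra
    qed
    have ar: "Suc (5*m) div 5 = m" "Suc (5*m) mod 5 = 1" "(5*m+1) div 5 = m" "(5*m+1) mod 5 = 1"
      "(5*m+4) div 5 = m" "(5*m+4) mod 5 = 4" "(5*m+2) div 5 = m" "(5*m+2) mod 5 = 2"
      "(5*m+5) div 5 = Suc m" "(5*m+5) mod 5 = 0" "(5*m+3) div 5 = m" for m :: nat by presburger+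
    have v1: "u1 x1 = 0" "u1 y1 = s" "u1 (\<alpha>(5*m+1)) = A m" "u1 (\<alpha>(5*m+4)) = D m" for m
      unfolding u1_def using dist1(2) ne1 inv1 ar by auto
    have v2: "u2 x2 = F 1" "u2 y2 = bb 0" "u2 (\<alpha>(5*m+2)) = bb (Suc m)" "u2 (\<alpha>(5*m+5)) = E m" for m
      unfolding u2_def using dist2(2) ne2 inv2 ar by auto
    have v3: "u3 x3 = 0" "u3 z3 = cc 0" "u3 (\<alpha>(5*m+3)) = cc (Suc m)" for m
      unfolding u3_def using dist3(2) ne3 inv3 ar by auto
    have vB: "u2 (if m = 0 then y2 else \<alpha>(5*m-3)) = bb m" for m
      by (cases m) (simp add: v2, simp only: Bsuc v2)
    have vC: "u3 (if m = 0 then z3 else \<alpha>(5*m-2)) = cc m" for m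
      by (cases m) (simp add: v3, simp only: Csuc v3)
    have key: "f (?a i) = u1 (fst (?a i)) + u2 (fst (snd (?a i))) + u3 (snd (snd (?a i)))"
      if "i \<ge> 1" for i
    proof (rule case_aseq[OF that])
      show "f (?a 1) = u1 (fst (?a 1)) + u2 (fst (snd (?a 1))) + u3 (snd (snd (?a 1)))"
        using F_def[of 1] unfolding aseq123 by (simp add: v1 v2 v3 v1[simplified] v2[simplified] v3[simplified])
      show "f (?a 2) = u1 (fst (?a 2)) + u2 (fst (snd (?a 2))) + u3 (snd (snd (?a 2)))"
        using F_def[of 2] bb0 unfolding aseq123 by (simp add: v1 v2 v3 v1[simplified] v2[simplified] v3[simplified])
      show "f (?a 3) = u1 (fst (?a 3)) + u2 (fst (snd (?a 3))) + u3 (snd (snd (?a 3)))"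
        using F_def[of 3] cc0 unfolding aseq123 by (simp add: v1 v2 v3 v1[simplified] v2[simplified] v3[simplified])
      fix m
      show "f (?a (5*m+4)) = u1 (fst (?a (5*m+4))) + u2 (fst (snd (?a (5*m+4)))) + u3 (snd (snd (?a (5*m+4))))"
        using F_def[of "5*m+4"] unfolding aseq4 by (simp add: v1 v2 v3 v1[simplified] v2[simplified] v3[simplified] A_def)
      show "f (?a (5*m+5)) = u1 (fst (?a (5*m+5))) + u2 (fst (snd (?a (5*m+5)))) + u3 (snd (snd (?a (5*m+5))))"
        using F_def[of "5*m+5"] unfolding aseq5 by (simp add: v1 v2 v3 v1[simplified] v2[simplified] v3[simplified] E_def)
      show "f (?a (5*m+7)) = u1 (fst (?a (5*m+7))) + u2 (fst (snd (?a (5*m+7)))) + u3 (snd (snd (?a (5*m+7))))"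
        using F_def[of "5*m+7"] unfolding aseq7 by (simp add: v1 v2 v3 v1[simplified] v2[simplified] v3[simplified] D_def)
      show "f (?a (5*m+8)) = u1 (fst (?a (5*m+8))) + u2 (fst (snd (?a (5*m+8)))) + u3 (snd (snd (?a (5*m+8))))"
        using F_def[of "5*m+8"] unfolding aseq8 by (simp add: v1 v3 v1[simplified] v3[simplified] vB bb_def)
      have "A m + E m + cc m = F(5*m+6)"
        proof -
        have "G m = F(5*m+6)+F(5*m+7)-F(5*m+4)-F(5*m+5)" by (simp add: G_def)
        then show ?thesis unfolding A_def E_def D_def by (rule lin1[OF ccS[of m]])
      qed
      then show "f (?a (5*m+6)) = u1 (fst (?a (5*m+6))) + u2 (fst (snd (?a (5*m+6)))) + u3 (snd (snd (?a (5*m+6))))"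
        using F_def[of "5*m+6"] unfolding aseq6 by (simp add: v1 v2 v1[simplified] v2[simplified] vC)
    qed
    show "\<exists>u1 u2 u3. \<forall>w1 w2 w3. (w1, w2, w3) \<in> ?T \<longrightarrow> f (w1, w2, w3) = u1 w1 + u2 w2 + u3 w3"
    proof (intro exI allI impI)
      fix w1 w2 w3 assume "(w1, w2, w3) \<in> ?T"
      then obtain i where "i \<ge> 1" "(w1, w2, w3) = ?a i" using T_elim by blast
      then show "f (w1, w2, w3) = u1 w1 + u2 w2 + u3 w3" using key[of i] by (metis fst_conv snd_conv)
    qed
  qed

  have full: "full X1 X2 X3 ?T"
    unfolding full_def
  proof (intro conjI allI impI good)
    show "?T \<subseteq> proj1 ?T \<times> proj2 ?T \<times> proj3 ?T"
      unfolding proj1_def proj2_def proj3_def by (force simp: image_iff)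
    fix S' assume S': "?T \<subseteq> S' \<and> S' \<subseteq> proj1 ?T \<times> proj2 ?T \<times> proj3 ?T \<and> good X1 X2 X3 S'"
    show "S' = ?T"
    proof (rule ccontr)
      assume "S' \<noteq> ?T"
      with S' obtain p where p: "p \<in> S'" "p \<notin> ?T" by blast
      from S' have gS: "good X1 X2 X3 S'" by blast
      have "\<exists>u1 u2 u3 :: 'a \<Rightarrow> complex. \<forall>w1 w2 w3. (w1, w2, w3) \<in> S' \<longrightarrow> (if (w1,w2,w3) = p then 1 else 0) = u1 w1 + u2 w2 + u3 w3"
        using spec[OF conjunct2[OF gS[unfolded good_def]], of "\<lambda>w. if w = p then 1 else 0"] by simp
      then obtain u1 u2 u3 :: "'a \<Rightarrow> complex" where
        u0: "\<forall>w1 w2 w3. (w1, w2, w3) \<in> S' \<longrightarrow> (if (w1,w2,w3) = p then 1 else 0) = u1 w1 + u2 w2 + u3 w3"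
        by blast
      have u: "\<And>w1 w2 w3. (w1, w2, w3) \<in> S' \<Longrightarrow> (if (w1,w2,w3) = p then 1 else 0) = u1 w1 + u2 w2 + u3 w3"
        using u0 by blast
      have hom: "u1 (fst (?a i)) + u2 (fst (snd (?a i))) + u3 (snd (snd (?a i))) = 0" if "i \<ge> 1" for i
      proof -
        have "?a i \<in> S'" "?a i \<noteq> p" using T_mem[OF that] S' p by auto
        then show ?thesis using u[of "fst (?a i)" "fst (snd (?a i))" "snd (snd (?a i))"] by simp
      qed
      have hp: "u1 (fst p) + u2 (fst (snd p)) + u3 (snd (snd p)) = 1"
        using u[of "fst p" "fst (snd p)" "snd (snd p)"] p by simp
      define v1 where "v1 w = u1 w - u1 x1" for w
      define v2 where "v2 w = u2 w - u2 x2" for w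
      define v3 where "v3 w = u3 w - u3 x3" for w
      have s0: "u1 x1 + u2 x2 + u3 x3 = 0" using hom[of 1] unfolding aseq123 by simp
      have vhom: "v1 (fst (?a i)) + v2 (fst (snd (?a i))) + v3 (snd (snd (?a i))) = 0" if "i \<ge> 1" for i
        using hom[OF that] s0 unfolding v1_def v2_def v3_def by algebra
      define cc where "cc m = v3 (if m = 0 then z3 else \<alpha>(5*m-2))" for m
      define bb where "bb m = v2 (if m = 0 then y2 else \<alpha>(5*m-3))" for m
      have z: "v1 x1 = 0" "v2 x2 = 0" "v3 x3 = 0" unfolding v1_def v2_def v3_def by simp_all
      have h2: "v1 y1 + v2 y2 = 0" using vhom[of 2] z unfolding aseq123 by simp
      have h3: "v1 y1 + v3 z3 = 0" using vhom[of 3] z unfolding aseq123 by simp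
      have e4: "v1 (\<alpha>(5*m+1)) + v2 (\<alpha>(5*m+2)) + v3 (\<alpha>(5*m+3)) = 0" for m
        using vhom[of "5*m+4"] by (simp add: aseq4)
      have e5: "v1 (\<alpha>(5*m+4)) + v2 (\<alpha>(5*m+5)) + v3 (\<alpha>(5*m+3)) = 0" for m
        using vhom[of "5*m+5"] by (simp add: aseq5)
      have e6: "v1 (\<alpha>(5*m+1)) + v2 (\<alpha>(5*m+5)) + cc m = 0" for m
        using vhom[of "5*m+6"] unfolding cc_def by (simp add: aseq6)
      have e7: "v1 (\<alpha>(5*m+4)) + v2 (\<alpha>(5*m+2)) = 0" for m
        using vhom[of "5*m+7"] z by (simp add: aseq7)
      have e8: "bb m + v3 (\<alpha>(5*m+3)) = 0" for m
        using vhom[of "5*m+8"] z unfolding bb_def by (simp add: aseq8)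
      have ccS: "cc (Suc m) = v3 (\<alpha>(5*m+3))" and bbS: "bb (Suc m) = v2 (\<alpha>(5*m+2))" for m
        unfolding cc_def bb_def Bsuc Csuc by (rule refl)+
      have rec: "cc m = 2 * cc (Suc m)" for m
        using e4[of m] e5[of m] e6[of m] e7[of m] ccS[of m] by algebra
      have "cc 0 = v3 z3" "bb 0 = v2 y2" unfolding cc_def bb_def by simp_all
      then have c00: "cc 0 = 0" using lin2[OF h2 h3 e8[of 0] ccS[of 0] rec[of 0]] by simp
      have cz: "cc m = 0" for m using halves_zero[of cc, OF c00 rec] .
      have bz: "bb m = 0" for m using e8[of m] cz[of "Suc m"] ccS[of m] by simp
      have a3z: "v3 (\<alpha>(5*m+3)) = 0" for m using cz[of "Suc m"] ccS by simp
      have a2z: "v2 (\<alpha>(5*m+2)) = 0" for m using bz[of "Suc m"] bbS by simp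
      have a4z: "v1 (\<alpha>(5*m+4)) = 0" for m using e7[of m] a2z by simp
      have a1z: "v1 (\<alpha>(5*m+1)) = 0" for m using e4[of m] a2z a3z by simp
      have a5z: "v2 (\<alpha>(5*m+5)) = 0" for m using e5[of m] a4z a3z by simp
      have z3z: "v3 z3 = 0" using cz[of 0] unfolding cc_def by simp
      have y1z: "v1 y1 = 0" using h3 z3z by simp
      have y2z: "v2 y2 = 0" using h2 y1z by simp
      have vB: "v2 (if m = 0 then y2 else \<alpha>(5*m-3)) = 0" for m using bz[of m] unfolding bb_def .
      have vC: "v3 (if m = 0 then z3 else \<alpha>(5*m-2)) = 0" for m using cz[of m] unfolding cc_def .
      have allz: "v1 (fst (?a i)) = 0 \<and> v2 (fst (snd (?a i))) = 0 \<and> v3 (snd (snd (?a i))) = 0"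
        if "i \<ge> 1" for i
        by (rule case_aseq[OF that])
          (unfold aseq123 aseq4 aseq5 aseq6 aseq7 aseq8, simp_all add: aseq4 aseq5 aseq6 aseq7 aseq8 z y1z y2z z3z a1z a2z a3z a4z a5z vB vC a1z[simplified] a2z[simplified] a3z[simplified] a4z[simplified] a5z[simplified]
             del: One_nat_def)
      from S' p have "p \<in> proj1 ?T \<times> proj2 ?T \<times> proj3 ?T" by blast
      then obtain i j k where ijk: "i \<ge> 1" "j \<ge> 1" "k \<ge> 1" "fst p = fst (?a i)"
        "fst (snd p) = fst (snd (?a j))" "snd (snd p) = snd (snd (?a k))"
        unfolding proj1_def proj2_def proj3_def Tset_def by (auto simp: case_prod_beta)
      have "v1 (fst p) = 0" "v2 (fst (snd p)) = 0" "v3 (snd (snd p)) = 0"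
        using allz[OF ijk(1)] allz[OF ijk(2)] allz[OF ijk(3)] ijk(4-6) by auto
      then have "u1 (fst p) + u2 (fst (snd p)) + u3 (snd (snd p)) = 0"
        using s0 unfolding v1_def v2_def v3_def by algebra
      with hp show False by simp
    qed
  qed
  show ?thesis using good full by blast
qed

end
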